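(* Let $n \in \mathbb{N}$, let $X=\{x_1,\dots,x_m\}$ and $Y=\{y_1,\dots,y_m\}$ be disjoint vertex sets with $m=|X| = |Y| \geqslant n^2 + n$, and let $I \in \{0,1\}^4$. Then $M^<_I(X,Y)$ and $M^>_I(X,Y)$ each have at least $2^{n-1}$ distinct induced ordered subgraphs of order $n$.
   Context: Ordered graphs are graphs with a linear order on the vertices; induced ordered subgraphs are those induced by vertex subsets with the inherited order, and two are distinct if they are not order-isomorphic. For $I=(I_1,I_2,I_3,I_4)\in\{0,1\}^4$ and $x_1<\dots<x_m<y_1<\dots<y_m$, the ordered graph $M^<_I(X,Y)$ on $X\cup Y$ has edges: $x_ix_j$ ($i\neq j$) is an edge iff $I_1=1$; for $i<j$, $x_iy_j$ is an edge iff $I_2=1$; for $i>j$, $x_iy_j$ is an edge iff $I_3=1$; $y_iy_j$ ($i\neq j$) is an edge iff $I_4=1$; $x_iy_i$ is an edge iff $i$ is odd. The ordered graph $M^>_I(X,Y)$ is defined identically except that the vertices of $Y$ are ordered $x_1<\dots<x_m<y_m<\dots<y_1$ (i.e. $y_1>\dots>y_m$). *)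

theory Defs
  imports Main
begin

(* Ordered graphs: vertex set V :: nat set with the natural order of nat,
   adjacency E :: nat => nat => bool (symmetric, irreflexive). *)

definition ord_iso :: "(nat \<Rightarrow> nat \<Rightarrow> bool) \<Rightarrow> nat set \<Rightarrow> (nat \<Rightarrow> nat \<Rightarrow> bool) \<Rightarrow> nat set \<Rightarrow> bool" where
  "ord_iso E S E' S' \<longleftrightarrow> (\<exists>f. bij_betw f S S' \<and> strict_mono_on S f \<and>
       (\<forall>a\<in>S. \<forall>b\<in>S. E a b \<longleftrightarrow> E' (f a) (f b)))"

(* Adjacency of x_i and y_j (1-based indices). *)
definition xy_adj :: "bool \<Rightarrow> bool \<Rightarrow> nat \<Rightarrow> nat \<Rightarrow> bool" where
  "xy_adj I2 I3 i j = (if i < j then I2 else if j < i then I3 else odd i)"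

(* Vertex positions 0..<2m. Position p < m is x_{p+1}; position p >= m is y_{yidx p}. *)
definition yidx_lt :: "nat \<Rightarrow> nat \<Rightarrow> nat" where
  "yidx_lt m p = p - m + 1"          (* x_1<..<x_m<y_1<..<y_m *)

definition yidx_gt :: "nat \<Rightarrow> nat \<Rightarrow> nat" where
  "yidx_gt m p = 2 * m - p"          (* x_1<..<x_m<y_m<..<y_1 *)

definition M_edge :: "bool \<Rightarrow> bool \<Rightarrow> bool \<Rightarrow> bool \<Rightarrow> nat \<Rightarrow> (nat \<Rightarrow> nat) \<Rightarrow> nat \<Rightarrow> nat \<Rightarrow> bool" where
  "M_edge I1 I2 I3 I4 m yidx a b =
     (a \<noteq> b \<and> a < 2 * m \<and> b < 2 * m \<and>
      (if a < m \<and> b < m then I1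
       else if m \<le> a \<and> m \<le> b then I4
       else if a < m then xy_adj I2 I3 (a + 1) (yidx b)
       else xy_adj I2 I3 (b + 1) (yidx a)))"

definition M_lt :: "bool \<Rightarrow> bool \<Rightarrow> bool \<Rightarrow> bool \<Rightarrow> nat \<Rightarrow> nat \<Rightarrow> nat \<Rightarrow> bool" where
  "M_lt I1 I2 I3 I4 m = M_edge I1 I2 I3 I4 m (yidx_lt m)"

definition M_gt :: "bool \<Rightarrow> bool \<Rightarrow> bool \<Rightarrow> bool \<Rightarrow> nat \<Rightarrow> nat \<Rightarrow> nat \<Rightarrow> bool" where
  "M_gt I1 I2 I3 I4 m = M_edge I1 I2 I3 I4 m (yidx_gt m)"

definition many_induced :: "nat set \<Rightarrow> (nat \<Rightarrow> nat \<Rightarrow> bool) \<Rightarrow> nat \<Rightarrow> nat \<Rightarrow> bool" where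
  "many_induced V E n k \<longleftrightarrow> (\<exists>F. F \<subseteq> {S. S \<subseteq> V \<and> card S = n} \<and> finite F \<and> card F \<ge> k \<and>
       (\<forall>S\<in>F. \<forall>T\<in>F. S \<noteq> T \<longrightarrow> \<not> ord_iso E S E T))"

end

theory Submission
  imports Defs
begin

lemma rank_pres:
  fixes S T :: "nat set"
  assumes bij: "bij_betw f S T" and sm: "strict_mono_on S f" and s: "s \<in> S"
  shows "card {u\<in>T. u < f s} = card {t\<in>S. t < s}"
proof -
  have "f ` {t\<in>S. t < s} = {u\<in>T. u < f s}"
  proof (intro equalityI subsetI)
    fix u assume "u \<in> f ` {t\<in>S. t < s}"
    then obtain t where t: "t\<in>S" "t<s" "u = f t" by auto
    then have "f t < f s" using sm s by (simp add: strict_mono_onD)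
    moreover have "f t \<in> T" using bij t by (auto simp: bij_betw_def)
    ultimately show "u \<in> {u\<in>T. u < f s}" using t by auto
  next
    fix u assume "u \<in> {u\<in>T. u < f s}"
    then have u: "u \<in> T" "u < f s" by auto
    then obtain t where t: "t \<in> S" "u = f t" using bij by (auto simp: bij_betw_def)
    have "t < s"
    proof (rule ccontr)
      assume "\<not> t < s"
      then have "s < t \<or> s = t" by auto
      then have "f s \<le> f t" using sm s t by (auto dest: strict_mono_onD)
      then show False using u t by auto
    qed
    then show "u \<in> f ` {t\<in>S. t<s}" using t by auto
  qed
  moreover have "inj_on f {t\<in>S. t<s}" using bij by (auto simp: bij_betw_def intro: inj_on_subset)
  ultimately show ?thesis by (metis card_image)
qed

lemma rank_less:
  fixes T :: "nat set"
  assumes "finite T" "u \<in> T" "u < v"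
  shows "card {w\<in>T. w<u} < card {w\<in>T. w<v}"
proof (rule psubset_card_mono)
  show "finite {w\<in>T. w<v}" using assms by auto
  show "{w\<in>T. w<u} \<subset> {w\<in>T. w<v}" using assms by auto
qed

lemma rank_unique:
  fixes T :: "nat set"
  assumes "finite T" "u \<in> T" "v \<in> T" "card {w\<in>T. w<u} = card {w\<in>T. w<v}"
  shows "u = v"
  using rank_less[OF assms(1,2), of v] rank_less[OF assms(1,3), of u] assms(4)
  by (metis less_irrefl nat_neq_iff)

lemma ord_iso_refl: "ord_iso E S E S"
  unfolding ord_iso_def
  by (rule exI[of _ id]) (auto intro: strict_mono_onI)

lemma ord_iso_sym:
  assumes "ord_iso E S E' T"
  shows "ord_iso E' T E S"
proof -
  obtain f where b: "bij_betw f S T" and sm: "strict_mono_on S f"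
    and e: "\<forall>a\<in>S. \<forall>b\<in>S. E a b \<longleftrightarrow> E' (f a) (f b)"
    using assms unfolding ord_iso_def by blast
  define g where "g = the_inv_into S f"
  have bg: "bij_betw g T S" unfolding g_def by (rule bij_betw_the_inv_into[OF b])
  have fg: "f (g u) = u" if "u \<in> T" for u
    unfolding g_def using f_the_inv_into_f_bij_betw[OF b] that by blast
  have gS: "g u \<in> S" if "u \<in> T" for u using bg that by (auto simp: bij_betw_def)
  have "strict_mono_on T g"
  proof (rule strict_mono_onI)
    fix r s assume rs: "r \<in> T" "s \<in> T" "r < s"
    show "g r < g s"
    proof (rule ccontr)
      assume "\<not> g r < g s"
      then have "g s < g r \<or> g s = g r" by auto
      then show False
      proof
        assume "g s < g r"
        then have "f (g s) < f (g r)" using sm gS rs by (auto dest: strict_mono_onD)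
        then show False using fg rs by auto
      next
        assume "g s = g r"
        then have "f (g s) = f (g r)" by simp
        then show False using fg rs by auto
      qed
    qed
  qed
  moreover have "\<forall>a\<in>T. \<forall>b\<in>T. E' a b \<longleftrightarrow> E (g a) (g b)"
    using e gS fg by metis
  ultimately show ?thesis using bg unfolding ord_iso_def by blast
qed


locale wg =
  fixes n m :: nat and xp yp :: "nat \<Rightarrow> nat" and E :: "nat \<Rightarrow> nat \<Rightarrow> bool"
    and I3 I4 rev :: bool
  assumes n1: "1 \<le> n"
  and xp_mono: "\<And>i j. i < j \<Longrightarrow> xp i < xp j"
  and xp_lt: "\<And>i. i < n \<Longrightarrow> xp i < m"
  and yp_ge: "\<And>l. l < n \<Longrightarrow> m \<le> yp l"
  and yp_lt: "\<And>l. l < n \<Longrightarrow> yp l < 2 * m"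
  and yp_inc: "\<And>l l'. \<not> rev \<Longrightarrow> l < l' \<Longrightarrow> l' < n \<Longrightarrow> yp l < yp l'"
  and yp_dec: "\<And>l l'. rev \<Longrightarrow> l < l' \<Longrightarrow> l' < n \<Longrightarrow> yp l' < yp l"
  and Eyy: "\<And>l l'. l < n \<Longrightarrow> l' < n \<Longrightarrow> l \<noteq> l' \<Longrightarrow> E (yp l) (yp l') = I4"
  and C1: "\<And>l. 1 \<le> l \<Longrightarrow> l < n \<Longrightarrow> E (xp (l - 1)) (yp l) = (\<not> I3)"
  and C2: "\<And>i j. j \<le> i \<Longrightarrow> i < n \<Longrightarrow> E (xp i) (yp j) = I3"
begin

definition Xs :: "nat set \<Rightarrow> nat set" where "Xs W = {..<n} - W"
definition Ss :: "nat set \<Rightarrow> nat set" where "Ss W = xp ` Xs W \<union> yp ` W"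
definition anc :: nat where "anc = (if I4 = I3 then n - 1 else 0)"

lemma xp_inj: "inj xp"
  by (metis injI linorder_neqE_nat xp_mono less_irrefl)

lemma yp_inj: "inj_on yp {..<n}"
proof (rule inj_onI)
  fix l l' assume "l \<in> {..<n}" "l' \<in> {..<n}" "yp l = yp l'"
  then show "l = l'"
    using yp_inc yp_dec by (metis lessThan_iff linorder_neqE_nat less_irrefl)
qed

lemma yp_less_iff: "l < n \<Longrightarrow> l' < n \<Longrightarrow> yp l' < yp l \<longleftrightarrow> (if rev then l < l' else l' < l)"
  using yp_inc yp_dec by (metis less_asym linorder_neqE_nat less_irrefl)

lemma xp_less_yp: "i < n \<Longrightarrow> l < n \<Longrightarrow> xp i < yp l"
  using xp_lt yp_ge by (meson less_le_trans)

context
  fixes W assumes W: "W \<subseteq> {..<n}"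
begin

lemma fin_X: "finite (Xs W)" by (simp add: Xs_def)
lemma fin_W: "finite W" using W finite_subset by blast
lemma X_lt: "i \<in> Xs W \<Longrightarrow> i < n" by (simp add: Xs_def)
lemma W_lt: "l \<in> W \<Longrightarrow> l < n" using W by auto

lemma fin_S: "finite (Ss W)" using fin_X fin_W by (simp add: Ss_def)

lemma card_X: "card (Xs W) = n - card W"
  unfolding Xs_def using W by (simp add: card_Diff_subset fin_W)

lemma card_S: "card (Ss W) = n"
proof -
  have d: "xp ` Xs W \<inter> yp ` W = {}"
    using xp_less_yp X_lt W_lt by (auto simp: less_irrefl) (metis less_irrefl)
  have "card (Ss W) = card (xp ` Xs W) + card (yp ` W)"
    unfolding Ss_def using d fin_X fin_W by (simp add: card_Un_disjoint)
  also have "card (xp ` Xs W) = card (Xs W)" using xp_inj by (simp add: card_image inj_on_subset)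
  also have "card (yp ` W) = card W" using yp_inj W by (simp add: card_image inj_on_subset)
  finally show ?thesis using card_X W fin_W
    by (metis card_lessThan card_mono finite_lessThan le_add_diff_inverse2)
qed

lemma S_sub: "Ss W \<subseteq> {0..<2*m}"
  unfolding Ss_def using xp_lt yp_lt X_lt W_lt by fastforce

lemma rank_x:
  assumes "i \<in> Xs W"
  shows "card {t\<in>Ss W. t < xp i} = card {i'\<in>Xs W. i' < i}"
proof -
  have "{t\<in>Ss W. t < xp i} = xp ` {i'\<in>Xs W. i' < i}"
  proof (intro equalityI subsetI)
    fix t assume "t \<in> {t\<in>Ss W. t < xp i}"
    then have t: "t \<in> Ss W" "t < xp i" by auto
    show "t \<in> xp ` {i'\<in>Xs W. i' < i}"
    proof (cases "t \<in> xp ` Xs W")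
      case True
      then obtain i' where "i' \<in> Xs W" "t = xp i'" by auto
      then show ?thesis using t xp_mono by (metis (mono_tags, lifting) image_eqI linorder_neqE_nat mem_Collect_eq order_less_asym)
    next
      case False
      then obtain l where "l \<in> W" "t = yp l" using t unfolding Ss_def by auto
      then show ?thesis using t xp_less_yp[of i l] X_lt[OF assms] W_lt by auto
    qed
  next
    fix t assume "t \<in> xp ` {i'\<in>Xs W. i' < i}"
    then show "t \<in> {t\<in>Ss W. t < xp i}" using xp_mono unfolding Ss_def by auto
  qed
  then show ?thesis using xp_inj by (simp add: card_image inj_on_subset)
qed

lemma rank_x_lt:
  assumes "i \<in> Xs W"
  shows "card {t\<in>Ss W. t < xp i} < card (Xs W)"
proof -
  have "{i'\<in>Xs W. i' < i} \<subset> Xs W" using assms by auto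
  then show ?thesis using rank_x[OF assms] fin_X by (simp add: psubset_card_mono)
qed

lemma rank_y:
  assumes "l \<in> W"
  shows "card {t\<in>Ss W. t < yp l} = card (Xs W) + card {l'\<in>W. yp l' < yp l}"
proof -
  have "{t\<in>Ss W. t < yp l} = xp ` Xs W \<union> yp ` {l'\<in>W. yp l' < yp l}"
    unfolding Ss_def using xp_less_yp X_lt W_lt assms by auto
  moreover have "xp ` Xs W \<inter> yp ` {l'\<in>W. yp l' < yp l} = {}"
    using xp_less_yp X_lt W_lt by auto (metis less_irrefl)
  moreover have "card (xp ` Xs W) = card (Xs W)" using xp_inj by (simp add: card_image inj_on_subset)
  moreover have "card (yp ` {l'\<in>W. yp l' < yp l}) = card {l'\<in>W. yp l' < yp l}"
    using yp_inj W by (intro card_image) (auto intro: inj_on_subset)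
  ultimately show ?thesis using fin_X fin_W by (simp add: card_Un_disjoint)
qed

lemma S_cases: "t \<in> Ss W \<Longrightarrow> (\<And>i. i \<in> Xs W \<Longrightarrow> t = xp i \<Longrightarrow> P) \<Longrightarrow> (\<And>l. l \<in> W \<Longrightarrow> t = yp l \<Longrightarrow> P) \<Longrightarrow> P"
  unfolding Ss_def by auto

end

end


context wg begin

lemma kless:
  assumes W: "W \<subseteq> {..<n}" and V: "V \<subseteq> {..<n}" and aW: "anc \<in> W" and aV: "anc \<in> V"
    and lt: "card (Xs W) < card (Xs V)"
  shows "\<not> ord_iso E (Ss W) E (Ss V)"
proof
  assume "ord_iso E (Ss W) E (Ss V)"
  then obtain f where b: "bij_betw f (Ss W) (Ss V)" and sm: "strict_mono_on (Ss W) f"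
    and e: "\<forall>a\<in>Ss W. \<forall>b\<in>Ss W. E a b \<longleftrightarrow> E (f a) (f b)"
    unfolding ord_iso_def by blast
  have ne: "Xs V \<noteq> {}" using lt by auto
  define j where "j = Max (Xs V)"
  have jX: "j \<in> Xs V" unfolding j_def using ne fin_X[OF V] by simp
  have jmax: "\<And>i. i \<in> Xs V \<Longrightarrow> i \<le> j" unfolding j_def using fin_X[OF V] by simp
  have jn: "j < n" "j \<notin> V" using jX by (auto simp: Xs_def)
  obtain u where uV: "u \<in> V" and Eu: "E (xp j) (yp u) \<noteq> I4"
  proof (cases "I4 = I3")
    case True
    have "n - 1 \<in> V" using aV True unfolding anc_def by simp
    then have "j < n - 1" using jn by (metis diff_Suc_1 less_SucE Suc_pred' n1 less_le_trans zero_less_one)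
    then have "j + 1 \<in> V" using jmax[of "j+1"] by (force simp: Xs_def)
    moreover have "E (xp j) (yp (j+1)) = (\<not> I3)" using C1[of "j+1"] \<open>j < n - 1\<close> by simp
    ultimately show ?thesis using that True by auto
  next
    case False
    have "0 \<in> V" using aV False unfolding anc_def by simp
    moreover have "E (xp j) (yp 0) = I3" using C2[of 0 j] jn by simp
    ultimately show ?thesis using that False by auto
  qed
  have un: "u < n" using uV V by auto
  have xT: "xp j \<in> Ss V" using jX by (simp add: Ss_def)
  have yT: "yp u \<in> Ss V" using uV by (simp add: Ss_def)
  obtain s1 where s1: "s1 \<in> Ss W" "f s1 = xp j" using b xT unfolding bij_betw_def by (metis imageE)
  obtain s2 where s2: "s2 \<in> Ss W" "f s2 = yp u" using b yT unfolding bij_betw_def by (metis imageE)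
  have r1: "card {t\<in>Ss V. t < xp j} = card (Xs V) - 1"
  proof -
    have "{i'\<in>Xs V. i' < j} = Xs V - {j}" using jmax by (auto simp: le_less)
    then show ?thesis using rank_x[OF V jX] jX fin_X[OF V] by simp
  qed
  have r2: "card {t\<in>Ss V. t < yp u} \<ge> card (Xs V)" using rank_y[OF V uV] by simp
  have notx: "\<And>s. s \<in> Ss W \<Longrightarrow> card {t\<in>Ss V. t < f s} \<ge> card (Xs W) \<Longrightarrow> \<exists>l. l \<in> W \<and> s = yp l"
  proof -
    fix s assume s: "s \<in> Ss W" "card {t\<in>Ss V. t < f s} \<ge> card (Xs W)"
    show "\<exists>l. l \<in> W \<and> s = yp l"
    proof (rule S_cases[OF W s(1)])
      fix i assume "i \<in> Xs W" "s = xp i"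
      then have "card {t\<in>Ss W. t < s} < card (Xs W)" using rank_x_lt[OF W] by simp
      then show ?thesis using rank_pres[OF b sm s(1)] s(2) by simp
    qed auto
  qed
  obtain l1 where l1: "l1 \<in> W" "s1 = yp l1"
  proof -
    have "card (Xs W) \<le> card (Xs V) - 1" using lt by simp
    then show ?thesis using notx[OF s1(1)] s1(2) r1 that by auto
  qed
  obtain l2 where l2: "l2 \<in> W" "s2 = yp l2" using notx[OF s2(1)] s2(2) r2 lt by auto
  have "l1 \<noteq> l2" using s1 s2 l1 l2 xp_less_yp[OF jn(1) un] by auto
  then have "E s1 s2 = I4" using Eyy l1 l2 W by auto
  moreover have "E s1 s2 = E (xp j) (yp u)" using e s1 s2 by auto
  ultimately show False using Eu by simp
qed

end

context wg begin

lemma keq: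
  assumes W: "W \<subseteq> {..<n}" and V: "V \<subseteq> {..<n}" and cw: "card W = card V"
    and jV: "j \<in> V" and jW: "j \<notin> W" and agree: "\<And>i. i < j \<Longrightarrow> i \<in> W \<longleftrightarrow> i \<in> V"
  shows "\<not> ord_iso E (Ss W) E (Ss V)"
proof
  assume "ord_iso E (Ss W) E (Ss V)"
  then obtain f where b: "bij_betw f (Ss W) (Ss V)" and sm: "strict_mono_on (Ss W) f"
    and e: "\<forall>a\<in>Ss W. \<forall>b\<in>Ss W. E a b \<longleftrightarrow> E (f a) (f b)"
    unfolding ord_iso_def by blast
  have fW: "finite W" using W finite_subset by blast
  have fV: "finite V" using V finite_subset by blast
  have jn: "j < n" using jV V by auto
  have below: "{i\<in>W. i < j} = {i\<in>V. i < j}" using agree by auto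
  have ex: "\<exists>l\<in>W. j < l"
  proof (rule ccontr)
    assume "\<not> ?thesis"
    then have "W = {i\<in>W. i < j}" using jW by (auto simp: not_less le_less)
    also have "\<dots> = {i\<in>V. i < j}" by (rule below)
    finally have "card W = card {i\<in>V. i < j}" by simp
    also have "\<dots> < card V" using jV fV by (intro psubset_card_mono) auto
    finally show False using cw by simp
  qed
  define l where "l = (LEAST l. l \<in> W \<and> j < l)"
  have lW: "l \<in> W" and jl: "j < l" unfolding l_def using ex LeastI_ex[of "\<lambda>l. l \<in> W \<and> j < l"] by auto
  have gap: "\<And>l'. j \<le> l' \<Longrightarrow> l' < l \<Longrightarrow> l' \<notin> W"
    using jW unfolding l_def by (metis (mono_tags, lifting) le_neq_implies_less not_less_Least)
  have ln: "l < n" using lW W by auto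
  have kk: "card (Xs W) = card (Xs V)" using card_X[OF W] card_X[OF V] cw by simp
  have yr: "card {l'\<in>W. yp l' < yp l} = card {l'\<in>V. yp l' < yp j}"
  proof (cases rev)
    case False
    have "{l'\<in>W. yp l' < yp l} = {l'\<in>W. l' < l}" using yp_less_iff[OF ln] W False by auto
    also have "\<dots> = {l'\<in>W. l' < j}" using gap jl by (auto simp: not_less) (meson leI)
    also have "\<dots> = {l'\<in>V. l' < j}" by (rule below)
    also have "\<dots> = {l'\<in>V. yp l' < yp j}" using yp_less_iff[OF jn] V False by auto
    finally show ?thesis by simp
  next
    case True
    have A: "{l'\<in>W. yp l' < yp l} = {l'\<in>W. l < l'}" using yp_less_iff[OF ln] W True by auto
    have B: "{l'\<in>V. yp l' < yp j} = {l'\<in>V. j < l'}" using yp_less_iff[OF jn] V True by auto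
    have W1: "W = insert l {l'\<in>W. l' < j} \<union> {l'\<in>W. l < l'}"
      using lW gap by (auto simp: not_less) (metis le_less linorder_neqE_nat)
    have V1: "V = insert j {l'\<in>V. l' < j} \<union> {l'\<in>V. j < l'}"
      using jV by auto
    have cW: "card W = Suc (card {l'\<in>W. l' < j}) + card {l'\<in>W. l < l'}"
    proof -
      have "card W = card (insert l {l'\<in>W. l' < j}) + card {l'\<in>W. l < l'}"
        by (subst W1, rule card_Un_disjoint) (use fW jl in auto)
      then show ?thesis using fW jl by simp
    qed
    have cV: "card V = Suc (card {l'\<in>V. l' < j}) + card {l'\<in>V. j < l'}"
    proof -
      have "card V = card (insert j {l'\<in>V. l' < j}) + card {l'\<in>V. j < l'}"
        by (subst V1, rule card_Un_disjoint) (use fV in auto)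
      then show ?thesis using fV by simp
    qed
    show ?thesis unfolding A B using cW cV cw below by simp
  qed
  have ylT: "f (yp l) = yp j"
  proof (rule rank_unique[OF fin_S[OF V]])
    show "f (yp l) \<in> Ss V" using b lW by (auto simp: bij_betw_def Ss_def)
    show "yp j \<in> Ss V" using jV by (simp add: Ss_def)
    have "card {t\<in>Ss V. t < f (yp l)} = card {t\<in>Ss W. t < yp l}"
      by (rule rank_pres[OF b sm]) (use lW in \<open>simp add: Ss_def\<close>)
    also have "\<dots> = card (Xs W) + card {l'\<in>W. yp l' < yp l}" by (rule rank_y[OF W lW])
    also have "\<dots> = card {t\<in>Ss V. t < yp j}" using rank_y[OF V jV] kk yr by simp
    finally show "card {t\<in>Ss V. t < f (yp l)} = card {t\<in>Ss V. t < yp j}" .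
  qed
  have l1X: "l - 1 \<in> Xs W"
  proof -
    have "l - 1 \<notin> W" using gap[of "l-1"] jl by auto
    then show ?thesis using ln by (auto simp: Xs_def)
  qed
  have xS: "xp (l-1) \<in> Ss W" using l1X by (simp add: Ss_def)
  have fxT: "f (xp (l-1)) \<in> Ss V" using b xS by (auto simp: bij_betw_def)
  have rkx: "card {t\<in>Ss V. t < f (xp (l-1))} = card {i'\<in>Xs W. i' < l - 1}"
    using rank_pres[OF b sm xS] rank_x[OF W l1X] by simp
  obtain i where iX: "i \<in> Xs V" and fi: "f (xp (l-1)) = xp i"
  proof (rule S_cases[OF V fxT])
    fix l'' assume "l'' \<in> V" "f (xp (l-1)) = yp l''"
    then have "card {t\<in>Ss V. t < f (xp (l-1))} \<ge> card (Xs V)" using rank_y[OF V] by simp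
    moreover have "card {i'\<in>Xs W. i' < l - 1} < card (Xs W)"
      using rank_x_lt[OF W l1X] rank_x[OF W l1X] by simp
    ultimately show ?thesis using rkx kk by simp
  qed auto
  have ci: "card {i'\<in>Xs V. i' < i} = card {i'\<in>Xs W. i' < l - 1}"
    using rkx fi rank_x[OF V iX] by simp
  have ij: "j < i"
  proof (rule ccontr)
    assume "\<not> j < i"
    moreover have "i \<noteq> j" using iX jV by (auto simp: Xs_def)
    ultimately have ilj: "i < j" by simp
    have "insert i {i'\<in>Xs V. i' < i} \<subseteq> {i'\<in>Xs W. i' < l - 1}"
      using ilj iX jl agree by (auto simp: Xs_def)
    then have "card (insert i {i'\<in>Xs V. i' < i}) \<le> card {i'\<in>Xs W. i' < l - 1}"
      by (intro card_mono) (auto simp: Xs_def)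
    then show False using ci by (simp add: Xs_def)
  qed
  have "E (xp (l-1)) (yp l) = (\<not> I3)" using C1[of l] jl ln by simp
  moreover have "E (xp i) (yp j) = I3" using C2[of j i] ij iX by (simp add: Xs_def)
  moreover have "E (xp (l-1)) (yp l) = E (f (xp (l-1))) (f (yp l))"
    using e xS lW by (auto simp: Ss_def)
  ultimately show False using fi ylT by simp
qed

end

context wg begin

lemma noniso:
  assumes W: "W \<subseteq> {..<n}" and V: "V \<subseteq> {..<n}" and aW: "anc \<in> W" and aV: "anc \<in> V"
    and ne: "W \<noteq> V"
  shows "\<not> ord_iso E (Ss W) E (Ss V)"
proof (cases "card (Xs W) < card (Xs V)")
  case True
  then show ?thesis using kless[OF W V aW aV] by simp
next
  case F1: False
  show ?thesis
  proof (cases "card (Xs V) < card (Xs W)")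
    case True
    then show ?thesis using kless[OF V W aV aW] ord_iso_sym by blast
  next
    case False
    with F1 have "card (Xs W) = card (Xs V)" by simp
    then have cw: "card W = card V"
      using card_X[OF W] card_X[OF V] W V
      by (metis card_lessThan card_mono diff_diff_cancel finite_lessThan)
    define D where "D = (W - V) \<union> (V - W)"
    have Dne: "D \<noteq> {}" using ne unfolding D_def by auto
    have Df: "finite D" unfolding D_def using W V finite_subset by blast
    define j where "j = Min D"
    have jD: "j \<in> D" unfolding j_def using Dne Df by simp
    have agree: "\<And>i. i < j \<Longrightarrow> i \<in> W \<longleftrightarrow> i \<in> V"
    proof -
      fix i assume "i < j"
      then have "i \<notin> D" unfolding j_def using Df Min_le not_le by blast
      then show "i \<in> W \<longleftrightarrow> i \<in> V" unfolding D_def by auto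
    qed
    show ?thesis
    proof (cases "j \<in> V")
      case True
      then have "j \<notin> W" using jD unfolding D_def by auto
      then show ?thesis using keq[OF W V cw True] agree by blast
    next
      case False
      then have "j \<in> W" using jD unfolding D_def by auto
      then have "\<not> ord_iso E (Ss V) E (Ss W)" using keq[OF V W cw[symmetric] _ False] agree by blast
      then show ?thesis using ord_iso_sym by blast
    qed
  qed
qed

lemma card_fam: "card {W. W \<subseteq> {..<n} \<and> anc \<in> W} = 2 ^ (n - 1)"
proof -
  have an: "anc < n" using n1 unfolding anc_def by auto
  have "{W. W \<subseteq> {..<n} \<and> anc \<in> W} = insert anc ` Pow ({..<n} - {anc})"
  proof (intro equalityI subsetI)
    fix W assume "W \<in> {W. W \<subseteq> {..<n} \<and> anc \<in> W}"
    then have "W = insert anc (W - {anc})" "W - {anc} \<in> Pow ({..<n} - {anc})" by auto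
    then show "W \<in> insert anc ` Pow ({..<n} - {anc})" by blast
  next
    fix W assume "W \<in> insert anc ` Pow ({..<n} - {anc})"
    then show "W \<in> {W. W \<subseteq> {..<n} \<and> anc \<in> W}" using an by auto
  qed
  moreover have "inj_on (insert anc) (Pow ({..<n} - {anc}))"
    by (rule inj_onI) (metis Diff_insert_absorb PowD insertCI subset_Diff_insert)
  ultimately have "card {W. W \<subseteq> {..<n} \<and> anc \<in> W} = card (Pow ({..<n} - {anc}))"
    by (simp add: card_image)
  also have "\<dots> = 2 ^ (n - 1)" using an by (simp add: card_Pow)
  finally show ?thesis .
qed

theorem many: "many_induced {0..<2*m} E n (2 ^ (n - 1))"
proof -
  define Fam where "Fam = {W. W \<subseteq> {..<n} \<and> anc \<in> W}"
  define F where "F = Ss ` Fam"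
  have finFam: "finite Fam" unfolding Fam_def by auto
  have inj: "inj_on Ss Fam"
  proof (rule inj_onI)
    fix W V assume "W \<in> Fam" "V \<in> Fam" "Ss W = Ss V"
    then show "W = V" using noniso[of W V] ord_iso_refl[of E "Ss W"] unfolding Fam_def by auto
  qed
  have "F \<subseteq> {S. S \<subseteq> {0..<2*m} \<and> card S = n}"
    unfolding F_def Fam_def using S_sub card_S by auto
  moreover have "finite F" unfolding F_def using finFam by simp
  moreover have "card F \<ge> 2 ^ (n - 1)"
    unfolding F_def using card_image[OF inj] card_fam unfolding Fam_def by simp
  moreover have "\<forall>S\<in>F. \<forall>T\<in>F. S \<noteq> T \<longrightarrow> \<not> ord_iso E S E T"
    unfolding F_def Fam_def using noniso by auto
  ultimately show ?thesis unfolding many_induced_def by blast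
qed

end

lemma small_case:
  assumes "n \<le> 1" "m \<ge> n ^ 2 + n"
  shows "many_induced {0..<2 * m} E n (2 ^ (n - 1))"
proof -
  define S :: "nat set" where "S = (if n = 0 then {} else {0})"
  have "S \<subseteq> {0..<2*m} \<and> card S = n" using assms unfolding S_def by auto
  then show ?thesis unfolding many_induced_def using assms
    by (intro exI[of _ "{S}"]) auto
qed

lemma big_case:
  fixes n m :: nat and I1 I2 I3 I4 :: bool
  assumes n2: "2 \<le> n" and mn: "m \<ge> n ^ 2 + n"
  shows "many_induced {0..<2 * m} (M_lt I1 I2 I3 I4 m) n (2 ^ (n - 1))
       \<and> many_induced {0..<2 * m} (M_gt I1 I2 I3 I4 m) n (2 ^ (n - 1))"
proof -
  define e :: nat where "e = (if I3 then 1 else 0)"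
  have e1: "e \<le> 1" unfolding e_def by simp
  have "n * n \<ge> 2 * n" using n2 by (simp add: mult_le_mono1)
  moreover have "n ^ 2 = n * n" by (simp add: power2_eq_square)
  ultimately have m2: "2 * n + 2 \<le> m" using mn n2 by linarith
  have oddE: "\<And>l. odd (2 * l + e + 1) = (\<not> I3)" unfolding e_def by simp
  interpret L: wg n m "\<lambda>j. 2*j+2+e" "\<lambda>l. m+2*l+e" "M_lt I1 I2 I3 I4 m" I3 I4 False
  proof (unfold_locales)
    fix l l' assume "l < n" "l' < n" "l \<noteq> l'"
    then show "M_lt I1 I2 I3 I4 m (m + 2 * l + e) (m + 2 * l' + e) = I4"
      using m2 e1 unfolding M_lt_def M_edge_def by auto
  next
    fix l assume "1 \<le> l" "l < n"
    then show "M_lt I1 I2 I3 I4 m (2 * (l - 1) + 2 + e) (m + 2 * l + e) = (\<not> I3)"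
      using m2 e1 oddE[of l] unfolding M_lt_def M_edge_def xy_adj_def yidx_lt_def
      by (auto simp: algebra_simps)
  next
    fix i j assume "j \<le> i" "i < n"
    then show "M_lt I1 I2 I3 I4 m (2 * i + 2 + e) (m + 2 * j + e) = I3"
      using m2 e1 unfolding M_lt_def M_edge_def xy_adj_def yidx_lt_def
      by auto
  qed (use n2 m2 e1 in auto)
  interpret G: wg n m "\<lambda>j. 2*j+2+e" "\<lambda>l. 2*m-2*l-1-e" "M_gt I1 I2 I3 I4 m" I3 I4 True
  proof (unfold_locales)
    fix l l' assume "l < n" "l' < n" "l \<noteq> l'"
    then show "M_gt I1 I2 I3 I4 m (2*m-2*l-1-e) (2*m-2*l'-1-e) = I4"
      using m2 e1 unfolding M_gt_def M_edge_def by auto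
  next
    fix l assume "1 \<le> l" "l < n"
    then show "M_gt I1 I2 I3 I4 m (2 * (l - 1) + 2 + e) (2*m-2*l-1-e) = (\<not> I3)"
      using m2 e1 oddE[of l] unfolding M_gt_def M_edge_def xy_adj_def yidx_gt_def
      by (auto simp: algebra_simps)
  next
    fix i j assume "j \<le> i" "i < n"
    then show "M_gt I1 I2 I3 I4 m (2 * i + 2 + e) (2*m-2*j-1-e) = I3"
      using m2 e1 unfolding M_gt_def M_edge_def xy_adj_def yidx_gt_def
      by auto
  qed (use n2 m2 e1 in auto)
  show ?thesis using L.many G.many by simp
qed

theorem lemma4:
  fixes n m :: nat and I1 I2 I3 I4 :: bool
  assumes "m \<ge> n ^ 2 + n"
  shows "many_induced {0..<2 * m} (M_lt I1 I2 I3 I4 m) n (2 ^ (n - 1))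
       \<and> many_induced {0..<2 * m} (M_gt I1 I2 I3 I4 m) n (2 ^ (n - 1))"
proof (cases "n \<le> 1")
  case True
  then show ?thesis using small_case assms by blast
next
  case False
  then show ?thesis using big_case assms by simp
qed

end
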